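(* Let $\Omega$ be a complete separable metric space, and let $\{\mathbb{E}_{\alpha}\}_{\alpha\in\mathcal{A}}$ be a family of nonlinear expectations on $(\Omega,C_b(\Omega))$. Suppose there exists a tight sublinear expectation $\hat{\mathbb{E}}$ on $(\Omega,B_b(\Omega))$ such that for every $\alpha\in\mathcal{A}$, \[ \mathbb{E}_{\alpha}[X]-\mathbb{E}_{\alpha}[Y]\le \hat{\mathbb{E}}[X-Y],\qquad X,Y\in C_b(\Omega). \] Then $\{\mathbb{E}_{\alpha}\}_{\alpha\in\mathcal{A}}$ is weakly compact: for each sequence $\{\mathbb{E}_{\alpha_n}\}_{n=1}^{\infty}$ there exists a subsequence $\{\mathbb{E}_{\alpha_{n_i}}\}_{i=1}^{\infty}$ such that for every $\varphi\in C_b(\Omega)$, the real sequence $\{\mathbb{E}_{\alpha_{n_i}}[\varphi]\}_{i=1}^{\infty}$ is a Cauchy sequence.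
   Context: $B_b(\Omega)$ denotes the space of bounded Borel-measurable real functions on $\Omega$ and $C_b(\Omega)$ the bounded continuous real functions on $\Omega$. For a linear space $\mathcal{H}$ of real functions on $\Omega$ containing the constants, a nonlinear expectation is a functional $\mathbb{E}:\mathcal{H}\to\mathbb{R}$ with $\mathbb{E}[c]=c$ for constants $c$ and $\mathbb{E}[X]\ge\mathbb{E}[Y]$ whenever $X\ge Y$. It is a sublinear expectation if in addition $\mathbb{E}[X+Y]\le\mathbb{E}[X]+\mathbb{E}[Y]$ and $\mathbb{E}[\lambda X]=\lambda\mathbb{E}[X]$ for $\lambda\ge 0$. A sublinear expectation $\hat{\mathbb{E}}$ on $(\Omega,B_b(\Omega))$ is tight if for each $\varepsilon>0$ there is a compact $K\subset\Omega$ with $\hat{\mathbb{E}}[\mathbf{1}_{K^c}]<\varepsilon$. *)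

theory Defs
  imports "HOL-Analysis.Analysis"
begin

definition Cb :: "('a::topological_space \<Rightarrow> real) set" where
  "Cb = {f. continuous_on UNIV f \<and> bounded (range f)}"

definition Bb :: "('a::topological_space \<Rightarrow> real) set" where
  "Bb = {f. f \<in> borel_measurable borel \<and> bounded (range f)}"

text \<open>Nonlinear expectation on the function space H (only values on H matter).\<close>
definition nonlinear_expectation :: "('a \<Rightarrow> real) set \<Rightarrow> (('a \<Rightarrow> real) \<Rightarrow> real) \<Rightarrow> bool" where
  "nonlinear_expectation H E \<longleftrightarrow>
     (\<forall>c::real. E (\<lambda>_. c) = c) \<and>
     (\<forall>X\<in>H. \<forall>Y\<in>H. (\<forall>\<omega>. Y \<omega> \<le> X \<omega>) \<longrightarrow> E Y \<le> E X)"

definition sublinear_expectation :: "('a \<Rightarrow> real) set \<Rightarrow> (('a \<Rightarrow> real) \<Rightarrow> real) \<Rightarrow> bool" where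
  "sublinear_expectation H E \<longleftrightarrow>
     nonlinear_expectation H E \<and>
     (\<forall>X\<in>H. \<forall>Y\<in>H. E (\<lambda>\<omega>. X \<omega> + Y \<omega>) \<le> E X + E Y) \<and>
     (\<forall>X\<in>H. \<forall>c::real. c \<ge> 0 \<longrightarrow> E (\<lambda>\<omega>. c * X \<omega>) = c * E X)"

definition tight :: "(('a::topological_space \<Rightarrow> real) \<Rightarrow> real) \<Rightarrow> bool" where
  "tight E \<longleftrightarrow> (\<forall>\<epsilon>>0. \<exists>K. compact K \<and> E (indicator (- K)) < \<epsilon>)"

end

theory Submission
  imports Defs "HOL-Library.Diagonal_Subsequence" "HOL-Library.Countable"
begin

lemma diag_conv:
  fixes f :: "nat \<Rightarrow> nat \<Rightarrow> real"
  assumes bnd: "\<And>k. \<exists>B. \<forall>n. \<bar>f k n\<bar> \<le> B"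
  shows "\<exists>r. strict_mono r \<and> (\<forall>k. convergent (\<lambda>i. f k (r i)))"
proof -
  interpret subseqs "\<lambda>k s. convergent (\<lambda>i. f k (s i))"
  proof
    fix n and s :: "nat \<Rightarrow> nat" assume "strict_mono s"
    obtain r' where r': "strict_mono r'" "monoseq (\<lambda>i. f n (s (r' i)))"
      using seq_monosub[of "\<lambda>i. f n (s i)"] by blast
    obtain B where B: "\<forall>m. \<bar>f n m\<bar> \<le> B" using bnd by blast
    have "Bseq (\<lambda>i. f n (s (r' i)))"
      using B by (intro BseqI'[of _ B]) auto
    then have "convergent (\<lambda>i. f n (s (r' i)))"
      using r' Bseq_monoseq_convergent by blast
    then show "\<exists>r'. strict_mono r' \<and> convergent (\<lambda>i. f n ((s \<circ> r') i))"
      using r' by auto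
  qed
  have "\<forall>k. convergent (\<lambda>i. f k (diagseq i))"
  proof
    fix k
    have "convergent (\<lambda>i. f k ((diagseq \<circ> (+) (Suc k)) i))"
    proof (rule diagseq_holds)
      fix r s n assume "strict_mono (r::nat\<Rightarrow>nat)" "convergent (\<lambda>i. f n (s i))"
      then show "convergent (\<lambda>i. f n ((s \<circ> r) i))"
        using convergent_subseq_convergent[of "\<lambda>i. f n (s i)" r] by (simp add: o_def)
    qed
    then have "convergent (\<lambda>i. f k (diagseq (i + Suc k)))" by (simp add: add.commute)
    then show "convergent (\<lambda>i. f k (diagseq i))"
      using convergent_ignore_initial_segment[of "\<lambda>i. f k (diagseq i)" "Suc k"] by simp
  qed
  then show ?thesis using subseq_diagseq by blast
qed

fun hmin :: "(nat \<Rightarrow> 'a::metric_space) \<Rightarrow> nat \<Rightarrow> real \<Rightarrow> (nat \<times> rat) list \<Rightarrow> 'a \<Rightarrow> real" where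
  "hmin xs n c [] \<omega> = c"
| "hmin xs n c (p # l) \<omega> = min (real_of_rat (snd p) + real n * dist \<omega> (xs (fst p))) (hmin xs n c l \<omega>)"

definition psi :: "(nat \<Rightarrow> 'a::metric_space) \<Rightarrow> rat \<times> nat \<times> (nat \<times> rat) list \<Rightarrow> 'a \<Rightarrow> real" where
  "psi xs t \<omega> = max (- real_of_rat (fst t)) (hmin xs (fst (snd t)) (real_of_rat (fst t)) (snd (snd t)) \<omega>)"

lemma hmin_cont: "continuous_on UNIV (hmin xs n c l)"
proof (induction l)
  case Nil then show ?case by (simp add: continuous_on_const)
next
  case (Cons p l)
  have "continuous_on UNIV (\<lambda>\<omega>. min (real_of_rat (snd p) + real n * dist \<omega> (xs (fst p))) (hmin xs n c l \<omega>))"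
    by (intro continuous_on_min continuous_on_add continuous_on_mult continuous_on_const continuous_on_dist continuous_on_id Cons)
  then show ?case by simp
qed

lemma hmin_le_c: "hmin xs n c l \<omega> \<le> c"
  by (induction l) auto

lemma hmin_le: "p \<in> set l \<Longrightarrow> hmin xs n c l \<omega> \<le> real_of_rat (snd p) + real n * dist \<omega> (xs (fst p))"
  by (induction l) auto

lemma hmin_ge: "L \<le> c \<Longrightarrow> (\<And>p. p \<in> set l \<Longrightarrow> L \<le> real_of_rat (snd p) + real n * dist \<omega> (xs (fst p))) \<Longrightarrow> L \<le> hmin xs n c l \<omega>"
  by (induction l) auto

lemma psi_Cb: "psi xs t \<in> Cb"
proof -
  have "continuous_on UNIV (psi xs t)"
    unfolding psi_def by (intro continuous_on_max continuous_on_const hmin_cont)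
  moreover have "\<forall>x\<in>range (psi xs t). norm x \<le> \<bar>real_of_rat (fst t)\<bar>"
  proof
    fix x assume "x \<in> range (psi xs t)"
    then obtain w where w: "x = psi xs t w" by blast
    have "hmin xs (fst (snd t)) (real_of_rat (fst t)) (snd (snd t)) w \<le> real_of_rat (fst t)"
      by (rule hmin_le_c)
    then show "norm x \<le> \<bar>real_of_rat (fst t)\<bar>" unfolding w psi_def real_norm_def
      by linarith
  qed
  then have "bounded (range (psi xs t))" unfolding bounded_iff by blast
  ultimately show ?thesis unfolding Cb_def by blast
qed

lemma approx:
  fixes \<phi> :: "'a::metric_space \<Rightarrow> real" and xs :: "nat \<Rightarrow> 'a"
  assumes dense: "\<And>x e. e > 0 \<Longrightarrow> \<exists>j. dist (xs j) x < e"
    and cont: "continuous_on UNIV \<phi>" and bnd: "\<And>\<omega>. \<bar>\<phi> \<omega>\<bar> \<le> M"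
    and K: "compact K" and \<delta>: "\<delta> > 0"
  shows "\<exists>t. (\<forall>\<omega>\<in>K. \<bar>\<phi> \<omega> - psi xs t \<omega>\<bar> \<le> \<delta>) \<and> (\<forall>\<omega>. \<bar>psi xs t \<omega>\<bar> \<le> M + 1)"
proof -
  have M0: "M \<ge> 0" using bnd[of undefined] by linarith
  define c :: rat where "c = of_int \<lceil>M\<rceil>"
  have rc: "real_of_rat c = of_int \<lceil>M\<rceil>" unfolding c_def by simp
  have c1: "M \<le> real_of_rat c" and c2: "real_of_rat c \<le> M + 1" unfolding rc by simp_all
  have "uniformly_continuous_on K \<phi>"
    using compact_uniformly_continuous[OF continuous_on_subset[OF cont] K] by simp
  then obtain \<eta> where \<eta>: "\<eta> > 0" and \<eta>2: "\<And>y z. y \<in> K \<Longrightarrow> z \<in> K \<Longrightarrow> dist z y < \<eta> \<Longrightarrow> dist (\<phi> z) (\<phi> y) < \<delta>/4"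
    unfolding uniformly_continuous_on_def using \<delta> by (metis divide_pos_pos zero_less_numeral)
  obtain m :: nat where m: "(2*M+\<delta>)/\<eta> < real m" using reals_Archimedean2 by blast
  define n where "n = Suc m"
  have n1: "real n \<ge> 1" unfolding n_def by simp
  have "2*M+\<delta> < real m * \<eta>" using m \<eta> by (simp add: pos_divide_less_eq)
  also have "\<dots> \<le> real n * \<eta>" unfolding n_def using \<eta> by (intro mult_right_mono) auto
  finally have n\<eta>: "2*M+\<delta> < real n * \<eta>" .
  define \<rho> where "\<rho> = \<delta> / (4 * real n)"
  have \<rho>0: "\<rho> > 0" unfolding \<rho>_def using \<delta> n1 by simp
  have n\<rho>: "real n * \<rho> = \<delta>/4" unfolding \<rho>_def using n1 by simp
  define r where "r = min \<eta> \<rho>"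
  have r0: "r > 0" unfolding r_def using \<eta> \<rho>0 by simp
  have r\<eta>: "r \<le> \<eta>" unfolding r_def by simp
  have nr: "real n * r \<le> \<delta>/4" using n\<rho> n1 unfolding r_def
    by (metis min.cobounded2 mult_left_mono of_nat_0_le_iff)
  have "K \<subseteq> (\<Union>y\<in>K. ball y r)" using r0 by auto
  then obtain F where F: "F \<subseteq> K" "finite F" "K \<subseteq> (\<Union>y\<in>F. ball y r)"
    using compactE_image[OF K, of K "\<lambda>y. ball y r"] by auto
  have "\<forall>y. \<exists>i. dist (xs i) y < \<rho>" using dense \<rho>0 by blast
  then obtain j where j: "\<And>y. dist (xs (j y)) y < \<rho>" by metis
  have "\<forall>y. \<exists>q::rat. \<phi> y < real_of_rat q \<and> real_of_rat q < \<phi> y + \<delta>/4"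
  proof
    fix y
    obtain x where "x \<in> \<rat>" "\<phi> y < x" "x < \<phi> y + \<delta>/4"
      using Rats_dense_in_real[of "\<phi> y" "\<phi> y + \<delta>/4"] \<delta> by auto
    then show "\<exists>q::rat. \<phi> y < real_of_rat q \<and> real_of_rat q < \<phi> y + \<delta>/4"
      by (metis Rats_cases)
  qed
  then obtain q where q: "\<And>y. \<phi> y < real_of_rat (q y)" "\<And>y. real_of_rat (q y) < \<phi> y + \<delta>/4"
    by metis
  obtain ys where ys: "set ys = F" using finite_list[OF F(2)] by blast
  define l where "l = map (\<lambda>y. (j y, q y)) ys"
  define t where "t = (c, n, l)"
  define h where "h = hmin xs n (real_of_rat c) l"
  have psi_eq: "psi xs t \<omega> = max (- real_of_rat c) (h \<omega>)" for \<omega>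
    unfolding psi_def t_def h_def by simp
  have hc: "h \<omega> \<le> real_of_rat c" for \<omega> unfolding h_def by (rule hmin_le_c)
  have up: "h \<omega> \<le> \<phi> \<omega> + \<delta>" if \<omega>: "\<omega> \<in> K" for \<omega>
  proof -
    obtain y where y: "y \<in> F" "dist y \<omega> < r" using F(3) \<omega> by auto
    have yK: "y \<in> K" using y F(1) by auto
    have "(j y, q y) \<in> set l" unfolding l_def using y ys by auto
    then have "h \<omega> \<le> real_of_rat (q y) + real n * dist \<omega> (xs (j y))"
      unfolding h_def using hmin_le by fastforce
    moreover have "dist \<omega> (xs (j y)) \<le> r + \<rho>"
      using dist_triangle[of \<omega> "xs (j y)" y] j[of y] y(2) by (simp add: dist_commute)
    then have "real n * dist \<omega> (xs (j y)) \<le> real n * (r + \<rho>)" by (intro mult_left_mono) auto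
    moreover have "\<phi> y < \<phi> \<omega> + \<delta>/4"
    proof -
      have "dist y \<omega> < \<eta>" using y(2) r\<eta> by simp
      then have "\<bar>\<phi> y - \<phi> \<omega>\<bar> < \<delta>/4" using \<eta>2[OF \<omega> yK] by (simp add: dist_real_def)
      then show ?thesis by linarith
    qed
    ultimately show ?thesis using q(2)[of y] nr n\<rho> by (simp add: distrib_left)
  qed
  have lo: "\<phi> \<omega> - \<delta> \<le> h \<omega>" if \<omega>: "\<omega> \<in> K" for \<omega>
    unfolding h_def
  proof (rule hmin_ge)
    show "\<phi> \<omega> - \<delta> \<le> real_of_rat c" using bnd[of \<omega>] c1 \<delta> by simp
  next
    fix p assume "p \<in> set l"
    then obtain y where y: "y \<in> F" "p = (j y, q y)" unfolding l_def using ys by auto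
    have yK: "y \<in> K" using y F(1) by auto
    show "\<phi> \<omega> - \<delta> \<le> real_of_rat (snd p) + real n * dist \<omega> (xs (fst p))"
    proof (cases "dist \<omega> y < \<eta>")
      case True
      have "\<phi> \<omega> < \<phi> y + \<delta>/4"
      proof -
        have "\<bar>\<phi> \<omega> - \<phi> y\<bar> < \<delta>/4" using \<eta>2[OF yK \<omega>] True by (simp add: dist_real_def)
        then show ?thesis by linarith
      qed
      moreover have "0 \<le> real n * dist \<omega> (xs (j y))" by simp
      ultimately show ?thesis unfolding y(2) fst_conv snd_conv using q(1)[of y] \<delta> by linarith
    next
      case False
      have "\<eta> - \<rho> \<le> dist \<omega> (xs (j y))"
        using dist_triangle[of \<omega> y "xs (j y)"] j[of y] False by (simp add: dist_commute)
      then have "real n * (\<eta> - \<rho>) \<le> real n * dist \<omega> (xs (j y))" by (intro mult_left_mono) auto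
      then have "2*M + \<delta> - \<delta>/4 \<le> real n * dist \<omega> (xs (j y))"
        using n\<eta> n\<rho> by (simp add: right_diff_distrib)
      then show ?thesis unfolding y(2) fst_conv snd_conv using q(1)[of y] bnd[of y] bnd[of \<omega>] \<delta> by linarith
    qed
  qed
  show ?thesis
  proof (intro exI conjI ballI allI)
    fix \<omega> assume w: "\<omega> \<in> K"
    then show "\<bar>\<phi> \<omega> - psi xs t \<omega>\<bar> \<le> \<delta>"
      using up[OF w] lo[OF w] bnd[of \<omega>] c1 hc[of \<omega>] \<delta> unfolding psi_eq by (simp add: abs_le_iff max_def)
  next
    fix \<omega>
    show "\<bar>psi xs t \<omega>\<bar> \<le> M + 1"
      using hc[of \<omega>] c1 c2 M0 unfolding psi_eq by (simp add: abs_le_iff max_def)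
  qed
qed


lemma Cb_bound: "\<phi> \<in> Cb \<Longrightarrow> \<exists>M\<ge>0. \<forall>\<omega>. \<bar>\<phi> \<omega>\<bar> \<le> M"
  unfolding Cb_def bounded_iff by (auto simp: real_norm_def) (metis abs_ge_zero order_trans)

lemma const_Cb: "(\<lambda>_. c) \<in> Cb"
  unfolding Cb_def by (auto simp: continuous_on_const)

lemma Bb_I: "f \<in> borel_measurable borel \<Longrightarrow> (\<And>\<omega>. \<bar>f \<omega>\<bar> \<le> B) \<Longrightarrow> f \<in> Bb"
  unfolding Bb_def bounded_iff by (auto simp: real_norm_def)

lemma Cb_meas: "\<phi> \<in> Cb \<Longrightarrow> \<phi> \<in> borel_measurable borel"
  unfolding Cb_def by (auto intro: borel_measurable_continuous_onI)

lemma E_bound: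
  assumes "nonlinear_expectation Cb E" "\<phi> \<in> Cb" "\<And>\<omega>. \<bar>\<phi> \<omega>\<bar> \<le> M"
  shows "\<bar>E \<phi>\<bar> \<le> M"
proof -
  have "E \<phi> \<le> E (\<lambda>_. M)" using assms const_Cb unfolding nonlinear_expectation_def
    by (metis abs_le_iff)
  moreover have "E (\<lambda>_. - M) \<le> E \<phi>" using assms const_Cb unfolding nonlinear_expectation_def
    by (metis abs_le_iff minus_le_iff)
  ultimately show ?thesis using assms(1) unfolding nonlinear_expectation_def by simp
qed

theorem mainTheorem1:
  fixes A :: "'b set"
    and E :: "'b \<Rightarrow> (('a::polish_space \<Rightarrow> real) \<Rightarrow> real)"
    and Ehat :: "('a \<Rightarrow> real) \<Rightarrow> real"
  assumes nonlin: "\<And>\<alpha>. \<alpha> \<in> A \<Longrightarrow> nonlinear_expectation Cb (E \<alpha>)"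
    and sublin: "sublinear_expectation Bb Ehat"
    and tight: "tight Ehat"
    and dom: "\<And>\<alpha> X Y. \<alpha> \<in> A \<Longrightarrow> X \<in> Cb \<Longrightarrow> Y \<in> Cb \<Longrightarrow>
                 E \<alpha> X - E \<alpha> Y \<le> Ehat (\<lambda>\<omega>. X \<omega> - Y \<omega>)"
  shows "\<forall>a::nat \<Rightarrow> 'b. (\<forall>n. a n \<in> A) \<longrightarrow>
           (\<exists>r. strict_mono r \<and> (\<forall>\<phi>\<in>Cb. Cauchy (\<lambda>i. E (a (r i)) \<phi>)))"
proof (intro allI impI)
  fix a :: "nat \<Rightarrow> 'b" assume aA: "\<forall>n. a n \<in> A"
  obtain D :: "'a set" where D: "countable D" "\<And>X. open X \<Longrightarrow> X \<noteq> {} \<Longrightarrow> \<exists>d\<in>D. d \<in> X"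
    using countable_dense_setE by blast
  have Dne: "D \<noteq> {}" using D(2)[of UNIV] by auto
  define xs where "xs = from_nat_into D"
  have dense: "\<exists>j. dist (xs j) x < e" if "e > 0" for x e
  proof -
    have "\<exists>y\<in>D. y \<in> ball x e" using D(2)[of "ball x e"] that by simp
    then obtain y where y: "y \<in> D" "y \<in> ball x e" by blast
    have "xs (to_nat_on D y) = y" unfolding xs_def using D(1) y(1) by simp
    then show ?thesis using y(2) by (metis dist_commute mem_ball)
  qed
  define d :: "nat \<Rightarrow> 'a \<Rightarrow> real" where "d k = psi xs (from_nat k)" for k
  have dCb: "d k \<in> Cb" for k unfolding d_def by (rule psi_Cb)
  define f where "f k n = E (a n) (d k)" for k n
  have "\<exists>B. \<forall>n. \<bar>f k n\<bar> \<le> B" for k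
  proof -
    obtain M where M: "\<forall>\<omega>. \<bar>d k \<omega>\<bar> \<le> M" using Cb_bound[OF dCb] by blast
    show ?thesis unfolding f_def using E_bound[OF nonlin dCb] M aA by blast
  qed
  then obtain r where r: "strict_mono r" "\<And>k. convergent (\<lambda>i. f k (r i))"
    using diag_conv[of f] by blast
  have mono: "X \<in> Bb \<Longrightarrow> Y \<in> Bb \<Longrightarrow> (\<And>\<omega>. X \<omega> \<le> Y \<omega>) \<Longrightarrow> Ehat X \<le> Ehat Y" for X Y
    using sublin unfolding sublinear_expectation_def nonlinear_expectation_def by blast
  have Ehat_const: "Ehat (\<lambda>_. c) = c" for c
    using sublin unfolding sublinear_expectation_def nonlinear_expectation_def by blast
  have Ehat_add: "X \<in> Bb \<Longrightarrow> Y \<in> Bb \<Longrightarrow> Ehat (\<lambda>\<omega>. X \<omega> + Y \<omega>) \<le> Ehat X + Ehat Y" for X Y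
    using sublin unfolding sublinear_expectation_def by blast
  have Ehat_hom: "X \<in> Bb \<Longrightarrow> c \<ge> 0 \<Longrightarrow> Ehat (\<lambda>\<omega>. c * X \<omega>) = c * Ehat X" for X c
    using sublin unfolding sublinear_expectation_def by blast
  have key: "\<exists>k. \<forall>\<alpha>\<in>A. \<bar>E \<alpha> \<phi> - E \<alpha> (d k)\<bar> < \<epsilon>" if \<phi>: "\<phi> \<in> Cb" and \<epsilon>: "\<epsilon> > 0" for \<phi> \<epsilon>
  proof -
    obtain M where M0: "M \<ge> 0" and M: "\<And>\<omega>. \<bar>\<phi> \<omega>\<bar> \<le> M" using Cb_bound[OF \<phi>] by blast
    define \<epsilon>' where "\<epsilon>' = \<epsilon> / (2 * (2*M+2))"
    have \<epsilon>'0: "\<epsilon>' > 0" unfolding \<epsilon>'_def using \<epsilon> M0 by simp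
    obtain K where K: "compact K" "Ehat (indicator (- K)) < \<epsilon>'"
      using tight \<epsilon>'0 unfolding tight_def by blast
    have cont: "continuous_on UNIV \<phi>" using \<phi> unfolding Cb_def by blast
    define \<delta> where "\<delta> = \<epsilon>/4"
    have \<delta>0: "\<delta> > 0" unfolding \<delta>_def using \<epsilon> by simp
    obtain t where t1: "\<forall>\<omega>\<in>K. \<bar>\<phi> \<omega> - psi xs t \<omega>\<bar> \<le> \<delta>" and t2: "\<forall>\<omega>. \<bar>psi xs t \<omega>\<bar> \<le> M + 1"
      using approx[OF dense cont M K(1) \<delta>0] by blast
    define \<psi> where "\<psi> = psi xs t"
    have d\<psi>: "d (to_nat t) = \<psi>" unfolding d_def \<psi>_def by simp
    have \<psi>Cb: "\<psi> \<in> Cb" unfolding \<psi>_def by (rule psi_Cb)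
    define ind where "ind = (indicator (- K) :: 'a \<Rightarrow> real)"
    have ind_meas: "ind \<in> borel_measurable borel"
      unfolding ind_def using K(1) by (intro borel_measurable_indicator borel_open) (simp add: compact_imp_closed open_Compl)
    have ind_b: "\<bar>ind \<omega>\<bar> \<le> 1" for \<omega> unfolding ind_def by (simp add: indicator_def)
    have indBb: "ind \<in> Bb" using Bb_I[OF ind_meas ind_b] .
    have cBb: "(\<lambda>_. \<delta>) \<in> Bb" by (rule Bb_I[of _ "\<bar>\<delta>\<bar>"]) auto
    have mindBb: "(\<lambda>\<omega>. (2*M+1) * ind \<omega>) \<in> Bb"
      by (rule Bb_I[of _ "2*M+1"]) (use ind_meas ind_b M0 in \<open>auto simp: abs_mult intro: mult_left_le\<close>)
    define g where "g = (\<lambda>\<omega>. \<delta> + (2*M+1) * ind \<omega>)"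
    have gBb: "g \<in> Bb" unfolding g_def
      by (rule Bb_I[of _ "\<bar>\<delta>\<bar> + (2*M+1)"]) (use ind_meas ind_b M0 in \<open>auto simp: abs_mult intro!: abs_triangle_ineq[THEN order_trans] mult_left_le\<close>)
    have Eg: "Ehat g < \<epsilon>"
    proof -
      have "Ehat g \<le> Ehat (\<lambda>_. \<delta>) + Ehat (\<lambda>\<omega>. (2*M+1) * ind \<omega>)"
        unfolding g_def using Ehat_add[OF cBb mindBb] by simp
      also have "\<dots> = \<delta> + (2*M+1) * Ehat ind" using Ehat_const Ehat_hom[OF indBb] M0 by simp
      also have "\<dots> \<le> \<delta> + (2*M+1) * \<epsilon>'" using K(2) M0 unfolding ind_def
        by (intro add_left_mono mult_left_mono) auto
      also have "\<dots> < \<epsilon>" unfolding \<delta>_def \<epsilon>'_def using \<epsilon> M0 by (simp add: field_simps add_pos_nonneg mult_nonneg_nonneg)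
      finally show ?thesis .
    qed
    have bound: "\<bar>\<phi> \<omega> - \<psi> \<omega>\<bar> \<le> g \<omega>" for \<omega>
    proof (cases "\<omega> \<in> K")
      case True then show ?thesis using t1 M0 unfolding g_def ind_def \<psi>_def by auto
    next
      case False then show ?thesis using M[of \<omega>] t2[rule_format, of \<omega>] \<delta>0 unfolding g_def ind_def \<psi>_def by auto
    qed
    have diffBb1: "(\<lambda>\<omega>. \<phi> \<omega> - \<psi> \<omega>) \<in> Bb"
    proof (rule Bb_I[of _ "M + (M+1)"])
      show "(\<lambda>\<omega>. \<phi> \<omega> - \<psi> \<omega>) \<in> borel_measurable borel"
        by (intro borel_measurable_diff Cb_meas \<phi> \<psi>Cb)
    next
      fix \<omega> show "\<bar>\<phi> \<omega> - \<psi> \<omega>\<bar> \<le> M + (M+1)"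
        using M[of \<omega>] t2[rule_format, of \<omega>] unfolding \<psi>_def by linarith
    qed
    have diffBb2: "(\<lambda>\<omega>. \<psi> \<omega> - \<phi> \<omega>) \<in> Bb"
    proof (rule Bb_I[of _ "M + (M+1)"])
      show "(\<lambda>\<omega>. \<psi> \<omega> - \<phi> \<omega>) \<in> borel_measurable borel"
        by (intro borel_measurable_diff Cb_meas \<phi> \<psi>Cb)
    next
      fix \<omega> show "\<bar>\<psi> \<omega> - \<phi> \<omega>\<bar> \<le> M + (M+1)"
        using M[of \<omega>] t2[rule_format, of \<omega>] unfolding \<psi>_def by linarith
    qed
    have e1: "Ehat (\<lambda>\<omega>. \<phi> \<omega> - \<psi> \<omega>) < \<epsilon>"
      using mono[OF diffBb1 gBb] bound Eg by (smt (verit, best) abs_le_iff)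
    have e2: "Ehat (\<lambda>\<omega>. \<psi> \<omega> - \<phi> \<omega>) < \<epsilon>"
      using mono[OF diffBb2 gBb] bound Eg by (smt (verit, best) abs_le_iff)
    show ?thesis
    proof (intro exI ballI)
      fix \<alpha> assume \<alpha>: "\<alpha> \<in> A"
      have "E \<alpha> \<phi> - E \<alpha> \<psi> < \<epsilon>" using dom[OF \<alpha> \<phi> \<psi>Cb] e1 by linarith
      moreover have "E \<alpha> \<psi> - E \<alpha> \<phi> < \<epsilon>" using dom[OF \<alpha> \<psi>Cb \<phi>] e2 by linarith
      ultimately show "\<bar>E \<alpha> \<phi> - E \<alpha> (d (to_nat t))\<bar> < \<epsilon>" unfolding d\<psi> by linarith
    qed
  qed
  show "\<exists>r. strict_mono r \<and> (\<forall>\<phi>\<in>Cb. Cauchy (\<lambda>i. E (a (r i)) \<phi>))"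
  proof (intro exI conjI ballI)
    show "strict_mono r" by (rule r(1))
  next
    fix \<phi> :: "'a \<Rightarrow> real" assume \<phi>: "\<phi> \<in> Cb"
    show "Cauchy (\<lambda>i. E (a (r i)) \<phi>)"
    proof (rule CauchyI)
      fix e :: real assume e: "0 < e"
      obtain k where k: "\<forall>\<alpha>\<in>A. \<bar>E \<alpha> \<phi> - E \<alpha> (d k)\<bar> < e/3"
        using key[OF \<phi>, of "e/3"] e by auto
      obtain N where N: "\<forall>m\<ge>N. \<forall>n\<ge>N. norm (f k (r m) - f k (r n)) < e/3"
        using CauchyD[OF convergent_Cauchy[OF r(2)[of k]], of "e/3"] e by auto
      show "\<exists>M. \<forall>m\<ge>M. \<forall>n\<ge>M. norm (E (a (r m)) \<phi> - E (a (r n)) \<phi>) < e"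
      proof (intro exI allI impI)
        fix m n assume mn: "N \<le> m" "N \<le> n"
        have "\<bar>E (a (r m)) (d k) - E (a (r n)) (d k)\<bar> < e/3" using N mn unfolding f_def by auto
        moreover have "\<bar>E (a (r m)) \<phi> - E (a (r m)) (d k)\<bar> < e/3" using k aA by blast
        moreover have "\<bar>E (a (r n)) \<phi> - E (a (r n)) (d k)\<bar> < e/3" using k aA by blast
        ultimately show "norm (E (a (r m)) \<phi> - E (a (r n)) \<phi>) < e" unfolding real_norm_def by linarith
      qed
    qed
  qed
qed

end
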